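(* Let $f:\mathbb R^{n+m}\to\mathbb R$ be a $C^5$ function, written $f(\mathbf x,\mathbf y)$ with $\mathbf x\in\mathbb R^n$, $\mathbf y\in\mathbb R^m$, with a critical point at the origin and $f(0)=0$, such that (A1) the Hessian of $f$ at the origin is positive semidefinite of rank $n$ and nullity $m\ge1$, and (A2) its kernel is $\{(0,\mathbf y):\mathbf y\in\mathbb R^m\}$. Let $(\mathbf x'',\mathbf y')$ be a point of the unit sphere in $\mathbb R^{n+m}$ such that $t\mapsto f(\mathbf x''t^2,\mathbf y't)$ vanishes through fourth order in $t$ (its Taylor coefficients at $t=0$ of orders $0,1,2,3,4$ are all zero). Then $\mathbf y'\ne0$; in particular the trajectory $t\mapsto(\mathbf x''t^2,\mathbf y't)$ is $1$-active.
   Context: A $C^k$ vector-valued function $\varphi(t)$ is $k$-vanishing if $\varphi^{(i)}(0)=0$ for $1\le i\le k$, and $k$-active if it is $(k-1)$-vanishing but not $k$-vanishing; thus $1$-active means the first derivative at $t=0$ is nonzero. *)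

theory Defs
  imports "HOL-Analysis.Analysis"
begin

definition pderiv_dir :: "'a::real_normed_vector \<Rightarrow> ('a \<Rightarrow> real) \<Rightarrow> 'a \<Rightarrow> real" where
  "pderiv_dir v g x = (THE d. ((\<lambda>t. g (x + t *\<^sub>R v)) has_real_derivative d) (at 0))"

fun iter_pderiv :: "'a::real_normed_vector list \<Rightarrow> ('a \<Rightarrow> real) \<Rightarrow> 'a \<Rightarrow> real" where
  "iter_pderiv [] g = g"
| "iter_pderiv (v # vs) g = pderiv_dir v (iter_pderiv vs g)"

definition Ck :: "nat \<Rightarrow> ('a::euclidean_space \<Rightarrow> real) \<Rightarrow> bool" where
  "Ck k g \<longleftrightarrow> (\<forall>vs. set vs \<subseteq> Basis \<and> length vs \<le> k \<longrightarrow>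
      continuous_on UNIV (iter_pderiv vs g) \<and>
      (\<forall>v ws x. vs = v # ws \<longrightarrow>
         ((\<lambda>t. iter_pderiv ws g (x + t *\<^sub>R v)) has_real_derivative iter_pderiv vs g x) (at 0)))"

definition hessian_map :: "('a::euclidean_space \<Rightarrow> real) \<Rightarrow> 'a \<Rightarrow> 'a \<Rightarrow> 'a" where
  "hessian_map g p v = (\<Sum>j\<in>Basis. (\<Sum>i\<in>Basis. (v \<bullet> i) * iter_pderiv [i, j] g p) *\<^sub>R j)"

definition vderiv_iter :: "nat \<Rightarrow> (real \<Rightarrow> 'b::real_normed_vector) \<Rightarrow> real \<Rightarrow> 'b" where
  "vderiv_iter i \<phi> = ((\<lambda>\<psi> t. vector_derivative \<psi> (at t)) ^^ i) \<phi>"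

definition k_vanishing :: "nat \<Rightarrow> (real \<Rightarrow> 'b::real_normed_vector) \<Rightarrow> bool" where
  "k_vanishing k \<phi> \<longleftrightarrow> (\<forall>i\<in>{1..k}. vderiv_iter i \<phi> 0 = 0)"

definition k_active :: "nat \<Rightarrow> (real \<Rightarrow> 'b::real_normed_vector) \<Rightarrow> bool" where
  "k_active k \<phi> \<longleftrightarrow> k_vanishing (k - 1) \<phi> \<and> \<not> k_vanishing k \<phi>"

end

theory Submission
  imports Defs
begin

lemma iter_pderiv_append: "iter_pderiv ws (pderiv_dir b g) = iter_pderiv (ws @ [b]) g"
  by (induction ws) auto

lemma Ck_mono: "Ck k g \<Longrightarrow> j \<le> k \<Longrightarrow> Ck j g"
  unfolding Ck_def by auto

lemma Ck_cont: "Ck k g \<Longrightarrow> continuous_on UNIV g"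
  unfolding Ck_def by (metis empty_subsetI iter_pderiv.simps(1) le0 list.size(3) list.set(1))

lemma Ck_base:
  assumes "Ck k g" "1 \<le> k" "b \<in> Basis"
  shows "((\<lambda>t. g (x + t *\<^sub>R b)) has_real_derivative pderiv_dir b g x) (at 0)"
proof -
  have "set [b] \<subseteq> Basis \<and> length [b] \<le> k" using assms by auto
  with assms(1) have "((\<lambda>t. iter_pderiv [] g (x + t *\<^sub>R b)) has_real_derivative iter_pderiv [b] g x) (at 0)"
    unfolding Ck_def by blast
  then show ?thesis by simp
qed

lemma Ck_pd:
  assumes "Ck (Suc k) g" "b \<in> Basis"
  shows "Ck k (pderiv_dir b g)"
proof -
  have A: "continuous_on UNIV (iter_pderiv vs (pderiv_dir b g))"
    if vs: "set vs \<subseteq> Basis" "length vs \<le> k" for vs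
  proof -
    have "set (vs @ [b]) \<subseteq> Basis \<and> length (vs @ [b]) \<le> Suc k" using assms vs by auto
    then show ?thesis using assms(1) unfolding Ck_def iter_pderiv_append by blast
  qed
  have B: "((\<lambda>t. iter_pderiv ws (pderiv_dir b g) (x + t *\<^sub>R v)) has_real_derivative iter_pderiv (v # ws) (pderiv_dir b g) x) (at 0)"
    if vs: "set (v # ws) \<subseteq> Basis" "length (v # ws) \<le> k" for v ws x
  proof -
    have "set (v # ws @ [b]) \<subseteq> Basis \<and> length (v # ws @ [b]) \<le> Suc k" using assms vs by auto
    then have "((\<lambda>t. iter_pderiv (ws @ [b]) g (x + t *\<^sub>R v)) has_real_derivative iter_pderiv (v # ws @ [b]) g x) (at 0)"
      using assms(1) unfolding Ck_def by blast
    then show ?thesis unfolding iter_pderiv_append by (metis append_Cons)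
  qed
  show ?thesis unfolding Ck_def using A B by blast
qed

lemma line_deriv:
  assumes "Ck k g" "1 \<le> k" "b \<in> Basis"
  shows "((\<lambda>t. g (w + t *\<^sub>R b)) has_real_derivative pderiv_dir b g (w + t *\<^sub>R b)) (at t)"
proof -
  have "((\<lambda>u. g ((w + t *\<^sub>R b) + u *\<^sub>R b)) has_real_derivative pderiv_dir b g (w + t *\<^sub>R b)) (at 0)"
    by (rule Ck_base[OF assms])
  then have "((\<lambda>u. g (w + (u + t) *\<^sub>R b)) has_real_derivative pderiv_dir b g (w + t *\<^sub>R b)) (at 0)"
    by (simp add: algebra_simps scaleR_add_left)
  then show ?thesis using DERIV_shift[of "\<lambda>t. g (w + t *\<^sub>R b)" _ 0 t] by simp
qed

lemma mvt_any:
  fixes F F' :: "real \<Rightarrow> real"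
  assumes "\<And>t. (F has_real_derivative F' t) (at t)"
  shows "\<exists>\<theta>. \<bar>\<theta>\<bar> \<le> \<bar>c\<bar> \<and> F c - F 0 = c * F' \<theta>"
proof (cases "c = 0")
  case True then show ?thesis by (intro exI[of _ 0]) auto
next
  case False
  show ?thesis
  proof (cases "c > 0")
    case True
    from MVT2[OF True, of F F'] assms obtain z where "0 < z" "z < c" "F c - F 0 = (c - 0) * F' z" by blast
    then show ?thesis by (intro exI[of _ z]) auto
  next
    case False
    with \<open>c \<noteq> 0\<close> have "c < 0" by auto
    from MVT2[OF this, of F F'] assms obtain z where "c < z" "z < 0" "F 0 - F c = (0 - c) * F' z" by blast
    then show ?thesis by (intro exI[of _ z]) (auto simp: algebra_simps)
  qed
qed

lemma dist_step: "dist (z + t *\<^sub>R b) x \<le> dist z x + \<bar>t\<bar> * norm (b::'a::real_normed_vector)"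
proof -
  have "dist (z + t *\<^sub>R b) x = norm ((z - x) + t *\<^sub>R b)" by (simp add: dist_norm algebra_simps)
  also have "\<dots> \<le> norm (z - x) + norm (t *\<^sub>R b)" by (rule norm_triangle_ineq)
  finally show ?thesis by (simp add: dist_norm)
qed

lemma tele:
  fixes g :: "'a::euclidean_space \<Rightarrow> real"
  assumes g: "Ck 1 g" and bs: "set bs \<subseteq> Basis"
    and cont: "\<forall>b\<in>set bs. \<forall>w. dist w x < \<delta> \<longrightarrow> \<bar>pderiv_dir b g w - pderiv_dir b g x\<bar> \<le> \<epsilon>"
  shows "dist z x + (\<Sum>b\<leftarrow>bs. \<bar>c b\<bar>) < \<delta> \<Longrightarrow>
    \<bar>g (z + (\<Sum>b\<leftarrow>bs. c b *\<^sub>R b)) - g z - (\<Sum>b\<leftarrow>bs. c b * pderiv_dir b g x)\<bar> \<le> \<epsilon> * (\<Sum>b\<leftarrow>bs. \<bar>c b\<bar>)"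
  using bs cont
proof (induction bs arbitrary: z)
  case Nil
  then show ?case by simp
next
  case (Cons b bs)
  have b: "b \<in> Basis" using Cons.prems by auto
  have nb: "norm b = 1" using b by simp
  define z' where "z' = z + c b *\<^sub>R b"
  have dz': "dist z' x \<le> dist z x + \<bar>c b\<bar>"
    unfolding z'_def using nb dist_step[of z "c b" b x] by simp
  have sl: "(\<Sum>b\<leftarrow>bs. \<bar>c b\<bar>) \<ge> 0" by (induction bs) auto
  have IH: "\<bar>g (z' + (\<Sum>b\<leftarrow>bs. c b *\<^sub>R b)) - g z' - (\<Sum>b\<leftarrow>bs. c b * pderiv_dir b g x)\<bar> \<le> \<epsilon> * (\<Sum>b\<leftarrow>bs. \<bar>c b\<bar>)"
    apply (rule Cons.IH) using Cons.prems dz' by auto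
  obtain \<theta> where th: "\<bar>\<theta>\<bar> \<le> \<bar>c b\<bar>" "g (z + c b *\<^sub>R b) - g (z + 0 *\<^sub>R b) = c b * pderiv_dir b g (z + \<theta> *\<^sub>R b)"
    using mvt_any[of "\<lambda>t. g (z + t *\<^sub>R b)" "\<lambda>t. pderiv_dir b g (z + t *\<^sub>R b)" "c b"]
      line_deriv[OF g order_refl b] by blast
  have "dist (z + \<theta> *\<^sub>R b) x \<le> dist z x + \<bar>\<theta>\<bar>"
    using nb dist_step[of z \<theta> b x] by simp
  also have "\<dots> < \<delta>" using Cons.prems th(1) sl by simp
  finally have "\<bar>pderiv_dir b g (z + \<theta> *\<^sub>R b) - pderiv_dir b g x\<bar> \<le> \<epsilon>" using Cons.prems by auto
  then have one: "\<bar>g z' - g z - c b * pderiv_dir b g x\<bar> \<le> \<epsilon> * \<bar>c b\<bar>"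
    using th(2) unfolding z'_def
    by (simp add: abs_mult right_diff_distrib[symmetric] mult.commute[of \<epsilon>] mult_left_mono)
  have "z + (\<Sum>b\<leftarrow>b # bs. c b *\<^sub>R b) = z' + (\<Sum>b\<leftarrow>bs. c b *\<^sub>R b)" by (simp add: z'_def algebra_simps)
  have e: "g (z + (\<Sum>b\<leftarrow>b # bs. c b *\<^sub>R b)) = g (z' + (\<Sum>b\<leftarrow>bs. c b *\<^sub>R b))" unfolding z'_def by (simp add: add.assoc)
  show ?case unfolding e using IH one by (simp add: algebra_simps abs_le_iff) 
qed

lemma frechet:
  fixes g :: "'a::euclidean_space \<Rightarrow> real"
  assumes g: "Ck 1 g"
  shows "(g has_derivative (\<lambda>h. \<Sum>b\<in>Basis. (h \<bullet> b) * pderiv_dir b g x)) (at x)"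
  unfolding has_derivative_at_alt
proof (intro conjI allI impI)
  show "bounded_linear (\<lambda>h. \<Sum>b\<in>Basis. (h \<bullet> b) * pderiv_dir b g x)"
    by (intro bounded_linear_sum bounded_linear_mult_const bounded_linear_inner_left)
  fix e :: real assume e: "e > 0"
  define N where "N = real DIM('a)"
  have N: "N \<ge> 1" unfolding N_def by (simp add: DIM_positive Suc_le_eq)
  define \<epsilon> where "\<epsilon> = e / N"
  have eps: "\<epsilon> > 0" using e N unfolding \<epsilon>_def by simp
  have "\<forall>b\<in>Basis. eventually (\<lambda>w. \<bar>pderiv_dir b g w - pderiv_dir b g x\<bar> \<le> \<epsilon>) (at x)"
  proof
    fix b :: 'a assume b: "b \<in> Basis"
    have Cb: "Ck 0 (pderiv_dir b g)" using Ck_pd[of 0 g b] g b by simp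
    have "isCont (pderiv_dir b g) x" using Ck_cont[OF Cb] by (simp add: continuous_on_eq_continuous_at)
    then have "((pderiv_dir b g) \<longlongrightarrow> pderiv_dir b g x) (at x)" by (simp add: isCont_def)
    then have "eventually (\<lambda>w. dist (pderiv_dir b g w) (pderiv_dir b g x) < \<epsilon>) (at x)"
      using eps tendstoD by blast
    then show "eventually (\<lambda>w. \<bar>pderiv_dir b g w - pderiv_dir b g x\<bar> \<le> \<epsilon>) (at x)"
      by eventually_elim (simp add: dist_real_def)
  qed
  then have "eventually (\<lambda>w. \<forall>b\<in>Basis. \<bar>pderiv_dir b g w - pderiv_dir b g x\<bar> \<le> \<epsilon>) (at x)"
    by (simp add: eventually_ball_finite)
  then obtain \<delta> where d0: "\<delta> > 0" "\<And>w. w \<noteq> x \<Longrightarrow> dist w x < \<delta> \<Longrightarrow> \<forall>b\<in>Basis. \<bar>pderiv_dir b g w - pderiv_dir b g x\<bar> \<le> \<epsilon>"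
    unfolding eventually_at by auto
  have d: "\<delta> > 0" "\<And>w. dist w x < \<delta> \<Longrightarrow> \<forall>b\<in>Basis. \<bar>pderiv_dir b g w - pderiv_dir b g x\<bar> \<le> \<epsilon>"
    using d0 eps by (auto, metis abs_zero diff_self less_imp_le)
  obtain bs :: "'a list" where bs: "distinct bs" "set bs = Basis" using finite_distinct_list[OF finite_Basis] by metis
  show "\<exists>d>0. \<forall>y. norm (y - x) < d \<longrightarrow> norm (g y - g x - (\<Sum>b\<in>Basis. ((y - x) \<bullet> b) * pderiv_dir b g x)) \<le> e * norm (y - x)"
  proof (intro exI[of _ "\<delta> / N"] conjI allI impI)
    show "\<delta> / N > 0" using d N by simp
    fix y assume y: "norm (y - x) < \<delta> / N"
    define c where "c b = (y - x) \<bullet> b" for b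
    have s1: "(\<Sum>b\<leftarrow>bs. c b *\<^sub>R b) = y - x"
      using bs by (simp add: sum_list_distinct_conv_sum_set c_def euclidean_representation)
    have s2: "(\<Sum>b\<leftarrow>bs. c b * pderiv_dir b g x) = (\<Sum>b\<in>Basis. ((y - x) \<bullet> b) * pderiv_dir b g x)"
      using bs by (simp add: sum_list_distinct_conv_sum_set c_def)
    have s3: "(\<Sum>b\<leftarrow>bs. \<bar>c b\<bar>) = (\<Sum>b\<in>Basis. \<bar>(y - x) \<bullet> b\<bar>)"
      using bs by (simp add: sum_list_distinct_conv_sum_set c_def)
    have s4: "(\<Sum>b\<in>Basis. \<bar>(y - x) \<bullet> b\<bar>) \<le> N * norm (y - x)"
    proof -
      have "(\<Sum>b\<in>Basis. \<bar>(y - x) \<bullet> b\<bar>) \<le> (\<Sum>b\<in>(Basis::'a set). norm (y - x))"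
        by (intro sum_mono Basis_le_norm)
      then show ?thesis by (simp add: N_def)
    qed
    have "N * norm (y - x) < \<delta>" using y N by (simp add: field_simps)
    then have lt: "dist x x + (\<Sum>b\<leftarrow>bs. \<bar>c b\<bar>) < \<delta>" using s3 s4 by simp
    have "\<bar>g (x + (\<Sum>b\<leftarrow>bs. c b *\<^sub>R b)) - g x - (\<Sum>b\<leftarrow>bs. c b * pderiv_dir b g x)\<bar> \<le> \<epsilon> * (\<Sum>b\<leftarrow>bs. \<bar>c b\<bar>)"
      by (rule tele[OF g _ _ lt]) (use bs d in auto)
    also have "\<dots> \<le> \<epsilon> * (N * norm (y - x))" using s3 s4 eps by (simp add: mult_left_mono)
    also have "\<dots> = e * norm (y - x)" using N unfolding \<epsilon>_def by simp
    finally show "norm (g y - g x - (\<Sum>b\<in>Basis. ((y - x) \<bullet> b) * pderiv_dir b g x)) \<le> e * norm (y - x)"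
      using s1 s2 by simp
  qed
qed

lemma ray_deriv:
  fixes g :: "'a::euclidean_space \<Rightarrow> real"
  assumes g: "Ck 1 g"
  shows "((\<lambda>s. g (s *\<^sub>R v)) has_real_derivative (\<Sum>b\<in>Basis. (v \<bullet> b) * pderiv_dir b g (s *\<^sub>R v))) (at s)"
proof -
  have d1: "((\<lambda>s. s *\<^sub>R v) has_derivative (\<lambda>ds. ds *\<^sub>R v)) (at s)"
    by (auto intro!: derivative_eq_intros)
  have "((\<lambda>s. g (s *\<^sub>R v)) has_derivative (\<lambda>ds. \<Sum>b\<in>Basis. ((ds *\<^sub>R v) \<bullet> b) * pderiv_dir b g (s *\<^sub>R v))) (at s)"
    using has_derivative_compose[OF d1 frechet[OF g, of "s *\<^sub>R v"]] by (simp add: o_def)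
  moreover have "(\<lambda>ds. \<Sum>b\<in>Basis. ((ds *\<^sub>R v) \<bullet> b) * pderiv_dir b g (s *\<^sub>R v)) = (*) (\<Sum>b\<in>Basis. (v \<bullet> b) * pderiv_dir b g (s *\<^sub>R v))"
    by (rule ext) (simp add: sum_distrib_left sum_distrib_right mult_ac)
  ultimately show ?thesis by (simp add: has_field_derivative_def)
qed

lemma norm_two: "i \<in> Basis \<Longrightarrow> j \<in> Basis \<Longrightarrow> norm (a *\<^sub>R i + b *\<^sub>R (j::'a::euclidean_space)) \<le> \<bar>a\<bar> + \<bar>b\<bar>"
  using norm_triangle_ineq[of "a *\<^sub>R i" "b *\<^sub>R j"] by simp

lemma delta_rep:
  fixes g :: "'a::euclidean_space \<Rightarrow> real"
  assumes g: "Ck 2 g" and i: "i \<in> Basis" and j: "j \<in> Basis"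
  shows "\<exists>\<alpha> \<beta>. \<bar>\<alpha>\<bar> \<le> \<bar>s\<bar> \<and> \<bar>\<beta>\<bar> \<le> \<bar>s\<bar> \<and>
     g (s *\<^sub>R i + s *\<^sub>R j) - g (s *\<^sub>R i) - g (s *\<^sub>R j) + g 0 = s * s * iter_pderiv [j, i] g (\<alpha> *\<^sub>R i + \<beta> *\<^sub>R j)"
proof -
  have g1: "Ck 1 g" using Ck_mono[OF g] by simp
  have gi: "Ck 1 (pderiv_dir i g)" using Ck_pd[of 1 g i] g i by (simp add: numeral_2_eq_2)
  define F where "F a = g (s *\<^sub>R j + a *\<^sub>R i) - g (0 + a *\<^sub>R i)" for a
  have "(F has_real_derivative (pderiv_dir i g (s *\<^sub>R j + a *\<^sub>R i) - pderiv_dir i g (0 + a *\<^sub>R i))) (at a)" for a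
    unfolding F_def by (intro DERIV_diff line_deriv[OF g1 order_refl i])
  from mvt_any[of F, OF this, of s] obtain \<alpha> where al: "\<bar>\<alpha>\<bar> \<le> \<bar>s\<bar>"
    "F s - F 0 = s * (pderiv_dir i g (s *\<^sub>R j + \<alpha> *\<^sub>R i) - pderiv_dir i g (0 + \<alpha> *\<^sub>R i))" by blast
  define G where "G b = pderiv_dir i g (\<alpha> *\<^sub>R i + b *\<^sub>R j)" for b
  have "(G has_real_derivative pderiv_dir j (pderiv_dir i g) (\<alpha> *\<^sub>R i + b *\<^sub>R j)) (at b)" for b
    unfolding G_def by (rule line_deriv[OF gi order_refl j])
  from mvt_any[of G, OF this, of s] obtain \<beta> where be: "\<bar>\<beta>\<bar> \<le> \<bar>s\<bar>"
    "G s - G 0 = s * pderiv_dir j (pderiv_dir i g) (\<alpha> *\<^sub>R i + \<beta> *\<^sub>R j)" by blast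
  have "g (s *\<^sub>R i + s *\<^sub>R j) - g (s *\<^sub>R i) - g (s *\<^sub>R j) + g 0 = F s - F 0"
    unfolding F_def by (simp add: add.commute)
  also have "\<dots> = s * (G s - G 0)" unfolding al(2) G_def by (simp add: add.commute)
  also have "\<dots> = s * s * iter_pderiv [j, i] g (\<alpha> *\<^sub>R i + \<beta> *\<^sub>R j)" using be(2) by simp
  finally show ?thesis using al(1) be(1) by blast
qed

lemma schwarz:
  fixes g :: "'a::euclidean_space \<Rightarrow> real"
  assumes g: "Ck 2 g" and i: "i \<in> Basis" and j: "j \<in> Basis"
  shows "iter_pderiv [i, j] g 0 = iter_pderiv [j, i] g 0"
proof -
  have c: "continuous_on UNIV (iter_pderiv [a, b] g)" if "a \<in> Basis" "b \<in> Basis" for a b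
  proof -
    have "set [a, b] \<subseteq> Basis \<and> length [a, b] \<le> 2" using that by auto
    then show ?thesis using g unfolding Ck_def by blast
  qed
  define Q1 where "Q1 = iter_pderiv [j, i] g"
  define Q2 where "Q2 = iter_pderiv [i, j] g"
  have c1: "isCont Q1 0" using c[OF j i] unfolding Q1_def by (simp add: continuous_on_eq_continuous_at)
  have c2: "isCont Q2 0" using c[OF i j] unfolding Q2_def by (simp add: continuous_on_eq_continuous_at)
  have "\<bar>Q2 0 - Q1 0\<bar> \<le> 2 * e" if e: "e > 0" for e
  proof -
    obtain d1 where d1: "d1 > 0" "\<And>x. dist x 0 < d1 \<Longrightarrow> dist (Q1 x) (Q1 0) < e"
      using c1 e unfolding continuous_at_eps_delta by blast
    obtain d2 where d2: "d2 > 0" "\<And>x. dist x 0 < d2 \<Longrightarrow> dist (Q2 x) (Q2 0) < e"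
      using c2 e unfolding continuous_at_eps_delta by blast
    define s where "s = min d1 d2 / 4"
    have s: "s > 0" "2 * s < d1" "2 * s < d2" using d1 d2 unfolding s_def by auto
    obtain a1 b1 where r1: "\<bar>a1\<bar> \<le> \<bar>s\<bar>" "\<bar>b1\<bar> \<le> \<bar>s\<bar>"
      "g (s *\<^sub>R i + s *\<^sub>R j) - g (s *\<^sub>R i) - g (s *\<^sub>R j) + g 0 = s * s * Q1 (a1 *\<^sub>R i + b1 *\<^sub>R j)"
      using delta_rep[OF g i j, of s] unfolding Q1_def by blast
    obtain a2 b2 where r2: "\<bar>a2\<bar> \<le> \<bar>s\<bar>" "\<bar>b2\<bar> \<le> \<bar>s\<bar>"
      "g (s *\<^sub>R j + s *\<^sub>R i) - g (s *\<^sub>R j) - g (s *\<^sub>R i) + g 0 = s * s * Q2 (a2 *\<^sub>R j + b2 *\<^sub>R i)"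
      using delta_rep[OF g j i, of s] unfolding Q2_def by blast
    have "s * s * Q1 (a1 *\<^sub>R i + b1 *\<^sub>R j) = s * s * Q2 (a2 *\<^sub>R j + b2 *\<^sub>R i)"
    proof -
      have "g (s *\<^sub>R j + s *\<^sub>R i) = g (s *\<^sub>R i + s *\<^sub>R j)" by (simp add: add.commute)
      note gc = this
      have "s * s * Q2 (a2 *\<^sub>R j + b2 *\<^sub>R i) = g (s *\<^sub>R j + s *\<^sub>R i) - g (s *\<^sub>R j) - g (s *\<^sub>R i) + g 0"
        using r2(3) by (rule sym)
      also have "\<dots> = g (s *\<^sub>R i + s *\<^sub>R j) - g (s *\<^sub>R i) - g (s *\<^sub>R j) + g 0"
        unfolding gc by simp
      finally have e2: "s * s * Q2 (a2 *\<^sub>R j + b2 *\<^sub>R i) = g (s *\<^sub>R i + s *\<^sub>R j) - g (s *\<^sub>R i) - g (s *\<^sub>R j) + g 0" .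
      show ?thesis unfolding e2 r1(3) ..
    qed
    then have eq: "Q1 (a1 *\<^sub>R i + b1 *\<^sub>R j) = Q2 (a2 *\<^sub>R j + b2 *\<^sub>R i)" using s by simp
    have "norm (a1 *\<^sub>R i + b1 *\<^sub>R j) < d1" using norm_two[OF i j, of a1 b1] r1 s by simp
    then have q1: "\<bar>Q1 (a1 *\<^sub>R i + b1 *\<^sub>R j) - Q1 0\<bar> < e" using d1(2) by (simp add: dist_real_def)
    have "norm (a2 *\<^sub>R j + b2 *\<^sub>R i) < d2" using norm_two[OF j i, of a2 b2] r2 s by simp
    then have q2: "\<bar>Q2 (a2 *\<^sub>R j + b2 *\<^sub>R i) - Q2 0\<bar> < e" using d2(2) by (simp add: dist_real_def)
    show ?thesis using q1 q2 eq by linarith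
  qed
  note H = this
  have "\<bar>Q2 0 - Q1 0\<bar> \<le> 0"
  proof (rule field_le_epsilon)
    fix e :: real assume "e > 0"
    then show "\<bar>Q2 0 - Q1 0\<bar> \<le> 0 + e" using H[of "e/2"] by simp
  qed
  then have "Q2 0 = Q1 0" by simp
  then show ?thesis unfolding Q1_def Q2_def .
qed

lemma hess_lin: "hessian_map g p (u + t *\<^sub>R w) = hessian_map g p u + t *\<^sub>R hessian_map g p w"
  unfolding hessian_map_def
  by (simp add: inner_add_left algebra_simps sum.distrib scaleR_sum_right sum_distrib_left)

lemma hess_inner: "u \<bullet> hessian_map g p w = (\<Sum>j\<in>Basis. \<Sum>i\<in>Basis. (u \<bullet> j) * (w \<bullet> i) * iter_pderiv [i, j] g p)"
  unfolding hessian_map_def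
  by (simp add: inner_sum_right sum_distrib_left mult_ac)

lemma hess_sym:
  fixes g :: "'a::euclidean_space \<Rightarrow> real"
  assumes g: "Ck 2 g"
  shows "u \<bullet> hessian_map g 0 w = w \<bullet> hessian_map g 0 u"
proof -
  have "u \<bullet> hessian_map g 0 w = (\<Sum>j\<in>Basis. \<Sum>i\<in>Basis. (u \<bullet> j) * (w \<bullet> i) * iter_pderiv [j, i] g 0)"
    unfolding hess_inner by (intro sum.cong refl) (use schwarz[OF g] in simp)
  also have "\<dots> = (\<Sum>i\<in>Basis. \<Sum>j\<in>Basis. (u \<bullet> j) * (w \<bullet> i) * iter_pderiv [j, i] g 0)"
    by (rule sum.swap)
  also have "\<dots> = w \<bullet> hessian_map g 0 u"
    unfolding hess_inner by (simp add: mult_ac)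
  finally show ?thesis .
qed

lemma quad_nonneg_lin:
  fixes a b :: real
  assumes "\<And>t. 0 \<le> 2 * t * a + t ^ 2 * b"
  shows "a = 0"
proof -
  define c where "c = \<bar>b\<bar> + 1"
  have c: "c > 0" "b \<le> c" unfolding c_def by auto
  define t where "t = - a / c"
  have "0 \<le> c ^ 2 * (2 * t * a + t ^ 2 * b)" using assms[of t] c by simp
  also have "c ^ 2 * (2 * t * a + t ^ 2 * b) = - 2 * a ^ 2 * c + a ^ 2 * b"
    unfolding t_def using c by (simp add: field_simps power2_eq_square)
  also have "\<dots> \<le> - 2 * a ^ 2 * c + a ^ 2 * c" using c mult_left_mono[of b c "a^2"] by (simp add: mult.commute)
  finally have "a ^ 2 * c \<le> 0" by (simp add: mult.commute)
  then have "a ^ 2 \<le> 0" using c by (simp add: mult_le_0_iff)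
  then show ?thesis by simp
qed

lemma psd_kernel:
  fixes g :: "'a::euclidean_space \<Rightarrow> real"
  assumes g: "Ck 2 g" and psd: "\<forall>v. v \<bullet> hessian_map g 0 v \<ge> 0"
    and z: "v \<bullet> hessian_map g 0 v = 0"
  shows "hessian_map g 0 v = 0"
proof -
  let ?M = "hessian_map g 0"
  define w where "w = ?M v"
  have "0 \<le> 2 * t * (w \<bullet> ?M v) + t ^ 2 * (w \<bullet> ?M w)" for t
  proof -
    have "0 \<le> (v + t *\<^sub>R w) \<bullet> ?M (v + t *\<^sub>R w)" using psd by blast
    also have "\<dots> = v \<bullet> ?M v + t * (v \<bullet> ?M w) + t * (w \<bullet> ?M v) + t ^ 2 * (w \<bullet> ?M w)"
      unfolding hess_lin by (simp add: inner_add_left inner_add_right algebra_simps power2_eq_square)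
    also have "\<dots> = 2 * t * (w \<bullet> ?M v) + t ^ 2 * (w \<bullet> ?M w)"
      using z hess_sym[OF g, of v w] by simp
    finally show ?thesis .
  qed
  then have "w \<bullet> ?M v = 0" by (rule quad_nonneg_lin)
  then show ?thesis unfolding w_def by simp
qed

lemma active_part:
  fixes x2 :: "'n::euclidean_space" and y1 :: "'m::euclidean_space"
  assumes "y1 \<noteq> 0"
  shows "k_active 1 (\<lambda>t::real. (t\<^sup>2 *\<^sub>R x2, t *\<^sub>R y1))"
proof -
  have "((\<lambda>t::real. (t\<^sup>2 *\<^sub>R x2, t *\<^sub>R y1)) has_vector_derivative ((2 * 0) *\<^sub>R x2, y1)) (at 0)"
    by (rule has_vector_derivative_Pair)
       (auto intro!: derivative_eq_intros simp: has_vector_derivative_def)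
  then have "vector_derivative (\<lambda>t::real. (t\<^sup>2 *\<^sub>R x2, t *\<^sub>R y1)) (at 0) = (0, y1)"
    by (simp add: vector_derivative_at)
  then show ?thesis using assms
    unfolding k_active_def k_vanishing_def vderiv_iter_def by (simp add: zero_prod_def)
qed

lemma DERIV_sq_comp:
  assumes "\<And>s. (h has_real_derivative h' s) (at s)" "D = h' (t\<^sup>2) * (2 * t)"
  shows "((\<lambda>t. h (t\<^sup>2)) has_real_derivative D) (at t)"
  unfolding assms(2) by (rule DERIV_chain2[OF assms(1)]) (auto intro!: derivative_eq_intros)

theorem lemma6p5:
  fixes f :: "('n::euclidean_space \<times> 'm::euclidean_space) \<Rightarrow> real"
    and x2 :: 'n and y1 :: 'm
  assumes C5: "Ck 5 f"
    and crit: "(f has_derivative (\<lambda>_. 0)) (at 0)"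
    and f0: "f 0 = 0"
    and psd: "\<forall>v. v \<bullet> hessian_map f 0 v \<ge> 0"
    and rank: "dim (range (hessian_map f 0)) = DIM('n)"
    and nullity: "dim {v. hessian_map f 0 v = 0} = DIM('m)"
    and m_pos: "DIM('m) \<ge> 1"
    and kernel: "{v. hessian_map f 0 v = 0} = {(0, y) | y. True}"
    and sphere: "norm (x2, y1) = 1"
    and vanish: "\<forall>k\<le>4. (deriv ^^ k) (\<lambda>t. f (t\<^sup>2 *\<^sub>R x2, t *\<^sub>R y1)) 0 = 0"
  shows "y1 \<noteq> 0 \<and> k_active 1 (\<lambda>t::real. (t\<^sup>2 *\<^sub>R x2, t *\<^sub>R y1))"
proof -
  have "y1 \<noteq> 0"
  proof
    assume y0: "y1 = 0"
    define v where "v = (x2, 0::'m)"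
    define h0 where "h0 s = f (s *\<^sub>R v)" for s :: real
    define h1 where "h1 s = (\<Sum>b\<in>Basis. (v \<bullet> b) * pderiv_dir b f (s *\<^sub>R v))" for s :: real
    define h2 where "h2 s = (\<Sum>b\<in>Basis. (v \<bullet> b) * (\<Sum>c\<in>Basis. (v \<bullet> c) * pderiv_dir c (pderiv_dir b f) (s *\<^sub>R v)))" for s :: real
    define h3 where "h3 s = (\<Sum>b\<in>Basis. (v \<bullet> b) * (\<Sum>c\<in>Basis. (v \<bullet> c) * (\<Sum>d\<in>Basis. (v \<bullet> d) * pderiv_dir d (pderiv_dir c (pderiv_dir b f)) (s *\<^sub>R v))))" for s :: real
    have K4: "Ck 4 (pderiv_dir b f)" if "b \<in> Basis" for b
      using Ck_pd[of 4 f b] C5 that by (simp add: numeral_eq_Suc)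
    have K3: "Ck 3 (pderiv_dir c (pderiv_dir b f))" if "b \<in> Basis" "c \<in> Basis" for b c
      using Ck_pd[of 3 "pderiv_dir b f" c] K4[OF that(1)] that by (simp add: numeral_eq_Suc)
    have K2: "Ck 2 (pderiv_dir d (pderiv_dir c (pderiv_dir b f)))" if "b \<in> Basis" "c \<in> Basis" "d \<in> Basis" for b c d
      using Ck_pd[of 2 "pderiv_dir c (pderiv_dir b f)" d] K3[OF that(1,2)] that by (simp add: numeral_eq_Suc)
    have C1: "Ck 1 (pderiv_dir b f)" if "b \<in> Basis" for b
      using Ck_mono[OF K4[OF that]] by simp
    have C2: "Ck 1 (pderiv_dir c (pderiv_dir b f))" if "b \<in> Basis" "c \<in> Basis" for b c
      using Ck_mono[OF K3[OF that]] by simp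
    have C3: "continuous_on UNIV (pderiv_dir d (pderiv_dir c (pderiv_dir b f)))" if "b \<in> Basis" "c \<in> Basis" "d \<in> Basis" for b c d
      using Ck_cont[OF K2[OF that]] .
    have D0: "(h0 has_real_derivative h1 s) (at s)" for s
      unfolding h0_def h1_def by (rule ray_deriv) (use Ck_mono[OF C5] in simp)
    have D1: "(h1 has_real_derivative h2 s) (at s)" for s
      unfolding h1_def h2_def
      by (intro DERIV_sum DERIV_cmult ray_deriv C1)
    have D2: "(h2 has_real_derivative h3 s) (at s)" for s
      unfolding h2_def h3_def
      by (intro DERIV_sum DERIV_cmult ray_deriv C2)
    have ch2: "continuous_on UNIV h2"
      using D2 by (meson DERIV_isCont continuous_at_imp_continuous_on)
    have ch3: "continuous_on UNIV h3"
      unfolding h3_def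
      by (intro continuous_intros continuous_on_compose2[OF C3]) auto
    define G1 where "G1 t = h1 (t\<^sup>2) * (2 * t)" for t :: real
    define G2 where "G2 t = 2 * h1 (t\<^sup>2) + 4 * t\<^sup>2 * h2 (t\<^sup>2)" for t :: real
    define G3 where "G3 t = 12 * t * h2 (t\<^sup>2) + 8 * t ^ 3 * h3 (t\<^sup>2)" for t :: real
    define g where "g t = f (t\<^sup>2 *\<^sub>R x2, t *\<^sub>R y1)" for t :: real
    have g_eq: "g = (\<lambda>t. h0 (t\<^sup>2))"
      by (rule ext) (simp add: g_def h0_def v_def y0)
    have E1: "deriv g = G1"
    proof (rule ext)
      fix t :: real
      have "((\<lambda>t. h0 (t\<^sup>2)) has_real_derivative G1 t) (at t)"
        unfolding G1_def by (rule DERIV_sq_comp[OF D0]) simp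
      then show "deriv g t = G1 t" unfolding g_eq by (rule DERIV_imp_deriv)
    qed
    have E2: "deriv G1 = G2"
    proof (rule ext)
      fix t :: real
      have "(G1 has_real_derivative G2 t) (at t)"
        unfolding G1_def G2_def
        apply (intro derivative_eq_intros DERIV_sq_comp[OF D1] refl)
        apply (simp_all add: power2_eq_square)
        by algebra
      then show "deriv G1 t = G2 t" by (rule DERIV_imp_deriv)
    qed
    have E3: "deriv G2 = G3"
    proof (rule ext)
      fix t :: real
      have "(G2 has_real_derivative G3 t) (at t)"
        unfolding G2_def
        apply (intro derivative_eq_intros DERIV_sq_comp[OF D1] DERIV_sq_comp[OF D2] refl)
        apply (simp_all add: power2_eq_square)
        unfolding G3_def power2_eq_square power3_eq_cube
        by algebra
      then show "deriv G2 t = G3 t" by (rule DERIV_imp_deriv)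
    qed
    have E4: "deriv G3 0 = 12 * h2 0"
    proof -
      define K where "K z = 12 * h2 (z\<^sup>2) + 8 * z\<^sup>2 * h3 (z\<^sup>2)" for z :: real
      have kz: "\<forall>z. G3 z - G3 0 = K z * (z - 0)"
        unfolding G3_def K_def by (simp add: algebra_simps power2_eq_square power3_eq_cube)
      have i2: "isCont h2 x" for x using D2 DERIV_isCont by blast
      have i3: "isCont h3 x" for x using ch3 by (simp add: continuous_on_eq_continuous_at)
      have "isCont K 0"
        unfolding K_def
        by (intro continuous_intros isCont_o2[OF _ i2] isCont_o2[OF _ i3])
      then have "continuous (at 0 within UNIV) K" by simp
      moreover note kz
      moreover have "K 0 = 12 * h2 0" unfolding K_def by simp
      ultimately have "(G3 has_real_derivative 12 * h2 0) (at 0 within UNIV)"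
        unfolding DERIV_caratheodory_within by blast
      then show ?thesis by (intro DERIV_imp_deriv) simp
    qed
    have "(deriv ^^ 4) g 0 = 0" using vanish unfolding g_def by auto
    then have "deriv (deriv (deriv (deriv g))) 0 = 0" by (simp add: numeral_eq_Suc)
    then have h20: "h2 0 = 0" unfolding E1 E2 E3 E4 by simp
    have "v \<bullet> hessian_map f 0 v = h2 0"
      unfolding hess_inner h2_def by (simp add: sum_distrib_left mult_ac)
    then have "hessian_map f 0 v = 0"
      using psd_kernel[OF Ck_mono[OF C5] psd] h20 by simp
    then have "v \<in> {(0, y) | y. True}" using kernel by blast
    then have "x2 = 0" unfolding v_def by auto
    then show False using sphere y0 by (simp add: zero_prod_def)
  qed
  then show ?thesis using active_part by blast
qed

end
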